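(* For any realization of a run of Algorithm 4 (described in the context) under the standing assumption, the number of unsuccessful iterations performed before termination is either zero or else satisfies \[ |\mathcal{U}|\ \le\ \Big\lfloor 1+\log_{\gamma_1}\Big(\tfrac{3(1-\eta)}{2L_H\delta_{\max}}\Big)+\log_{\gamma_1}(\epsilon_H)\Big\rfloor\,(|\mathcal{S}|+1). \]
   Context: Let $f:\mathbb{R}^n\to\mathbb{R}$ with gradient $g=\nabla f$ and Hessian $H=\nabla^2f$; $\|\cdot\|$ is the Euclidean norm, $\lambda_{\min}$ the smallest eigenvalue, $\mathbb{S}^n$ the real symmetric $n\times n$ matrices. Write $f_k=f(x_k)$, $g_k=g(x_k)$, $H_k=H(x_k)$, $m_k(x)=f_k+g_k^T(x-x_k)+\tfrac12(x-x_k)^TH_k(x-x_k)$. Exact arithmetic is assumed. Algorithm 2 (truncated CG; inputs nonzero $g$, $H\in\mathbb{S}^n$, $\epsilon>0$, $\delta>0$, $\zeta\in(0,1)$, flag capCG, and $M\ge\|H\|$): $k_{\max}=\min\{n,\tfrac12\sqrt{\kappa}\ln(4\kappa^{3/2}/\zeta)\}$ with $\kappa=(M+2\epsilon)/\epsilon$ if capCG is true, else $k_{\max}=n$. Set $y_0=0,r_0=g,p_0=-g,j=0$. While $j<k_{\max}$: if $p_j^T(H+2\epsilon I)p_j\le\epsilon\|p_j\|^2$, return $s=y_j+\sigma p_j$ with $\sigma\ge0$, $\|s\|=\delta$, flag BND-NEG; set $\alpha_j=\|r_j\|^2/(p_j^T(H+2\epsilon I)p_j)$, $y_{j+1}=y_j+\alpha_jp_j$;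 if $\|y_{j+1}\|\ge\delta$, return $s=y_j+\sigma p_j$ with $\sigma\ge0$, $\|s\|=\delta$, flag BND-NORM; set $r_{j+1}=r_j+\alpha_j(H+2\epsilon I)p_j$; if $\|r_{j+1}\|\le\tfrac\zeta2\min\{\|g\|,\epsilon\|y_{j+1}\|\}$, return $s=y_{j+1}$, flag INT-RES; set $\beta_{j+1}=\|r_{j+1}\|^2/\|r_j\|^2$, $p_{j+1}=-r_{j+1}+\beta_{j+1}p_j$, $j\leftarrow j+1$. On loop exit return $s=y_j$, flag INT-MAX. Algorithm 3 (minimum eigenvalue oracle, MEO; inputs $g$, $H\in\mathbb{S}^n$, $\epsilon>0$, $\delta>0$, $\xi\in(0,1)$, $M\ge\|H\|$): a possibly randomized procedure that either returns $s=\pm\delta v$ with $\|v\|=1$, $v^THv\le-\epsilon/2$, satisfying $g^Ts\le0$, $s^THs\le-\tfrac12\epsilon\|s\|^2$, $\|s\|=\delta$, or returns an indication that $H\succeq-\epsilon I$. Algorithm 4 (inexact trust-region Newton-CG). Inputs: $\epsilon_g,\epsilon_H>0$; $\gamma_1\in(0,1)$, $\gamma_2\ge1$, $\psi\in(1/\gamma_2,1]$; $x_0$; $\delta_0>0$; $\delta_{\max}\ge\delta_0$; $\eta\in(0,1)$; $\zeta\in(0,1)$; $\xi\in[0,1)$; capCG; $M\ge L_g$. For $k=0,1,\dots$: evaluate $g_k,H_k$. If $g_k\ne0$, call Algorithm 2 with $(g_k,H_k,\epsilon_H,\delta_k,\zeta,\text{capCG},M)$ obtaining $s_k^{CG}$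 and flag outCG; else set $s_k^{CG}=0$, outCG$=$INT-RES. If outCG$\in\{$BND-NEG, BND-NORM$\}$ or ($\|g_k\|>\epsilon_g$ and outCG$=$INT-RES), set $s_k=s_k^{CG}$. Otherwise call Algorithm 3 with $(g_k,H_k,\epsilon_H,\delta_k,\xi,M)$; if it indicates $H_k\succeq-\epsilon_HI$, return $x_k$ (terminate), else take its output as $s_k$. Set $\rho_k=\frac{f_k-f(x_k+s_k)}{m_k(x_k)-m_k(x_k+s_k)}$. If $\rho_k\ge\eta$: $x_{k+1}=x_k+s_k$ and $\delta_{k+1}=\min\{\gamma_2\delta_k,\delta_{\max}\}$ if $\|s_k\|\ge\psi\delta_k$, else $\delta_{k+1}=\delta_k$. If $\rho_k<\eta$: $x_{k+1}=x_k$, $\delta_{k+1}=\gamma_1\|s_k\|$. $\mathcal{K}$ is the set of indices $k$ such that iteration $k$ is completed without termination (for the given realization); $\mathcal{S}=\{k\in\mathcal{K}:\rho_k\ge\eta\}$, $\mathcal{U}=\{k\in\mathcal{K}:\rho_k<\eta\}$. Standing assumption: $\{f_k\}$ is bounded below by some $f_{\rm low}\in\mathbb{R}$, and all segments $[x_k,x_k+s_k]$ lie in an open set on which $f$ is twice continuously differentiable with gradient Lipschitz with constant $L_g>0$ and Hessian Lipschitz with constant $L_H>0$. *)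

theory Defs
  imports "HOL-Analysis.Analysis" "HOL-Library.Extended_Nat"
begin

datatype cg_flag = BND_NEG | BND_NORM | INT_RES | INT_MAX

primrec cg_seq :: "real^'n \<Rightarrow> real^'n^'n \<Rightarrow> real \<Rightarrow> nat \<Rightarrow> ((real^'n) \<times> (real^'n) \<times> (real^'n))" where
  "cg_seq g H eps 0 = (0, g, - g)"
| "cg_seq g H eps (Suc j) =
     (let (y, r, p) = cg_seq g H eps j;
          Ap = H *v p + (2 * eps) *\<^sub>R p;
          alpha = (norm r)\<^sup>2 / (p \<bullet> Ap);
          y' = y + alpha *\<^sub>R p;
          r' = r + alpha *\<^sub>R Ap;
          beta = (norm r')\<^sup>2 / (norm r)\<^sup>2
      in (y', r', - r' + beta *\<^sub>R p))"

definition cg_kmax :: "nat \<Rightarrow> bool \<Rightarrow> real \<Rightarrow> real \<Rightarrow> real \<Rightarrow> real" where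
  "cg_kmax n capCG eps M zeta =
     (let kappa = (M + 2 * eps) / eps
      in if capCG then min (real n) (1/2 * sqrt kappa * ln (4 * kappa powr (3/2) / zeta))
         else real n)"

definition to_bnd :: "real^'n \<Rightarrow> real^'n \<Rightarrow> real \<Rightarrow> real^'n" where
  "to_bnd y p delta = y + (SOME sigma. sigma \<ge> 0 \<and> norm (y + sigma *\<^sub>R p) = delta) *\<^sub>R p"

fun cg_loop :: "real^'n \<Rightarrow> real^'n^'n \<Rightarrow> real \<Rightarrow> real \<Rightarrow> real \<Rightarrow> real \<Rightarrow> nat \<Rightarrow> nat
                 \<Rightarrow> (real^'n) \<times> cg_flag" where
  "cg_loop g H eps delta zeta kmax j 0 = (fst (cg_seq g H eps j), INT_MAX)"
| "cg_loop g H eps delta zeta kmax j (Suc fuel) =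
     (let (y, r, p) = cg_seq g H eps j;
          (y', r', p') = cg_seq g H eps (Suc j)
      in if \<not> (real j < kmax) then (y, INT_MAX)
         else if p \<bullet> (H *v p + (2 * eps) *\<^sub>R p) \<le> eps * (norm p)\<^sup>2 then (to_bnd y p delta, BND_NEG)
         else if norm y' \<ge> delta then (to_bnd y p delta, BND_NORM)
         else if norm r' \<le> zeta / 2 * min (norm g) (eps * norm y') then (y', INT_RES)
         else cg_loop g H eps delta zeta kmax (Suc j) fuel)"

text \<open>Algorithm 2 with inputs (g, H, eps, delta, zeta, capCG, M); since k_max \<le> n,
  n+1 loop tests suffice (at j = n the loop guard fails).\<close>
definition truncated_cg :: "real^'n \<Rightarrow> real^'n^'n \<Rightarrow> real \<Rightarrow> real \<Rightarrow> real \<Rightarrow> bool \<Rightarrow> real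
                              \<Rightarrow> (real^'n) \<times> cg_flag" where
  "truncated_cg g H eps delta zeta capCG M =
     cg_loop g H eps delta zeta (cg_kmax CARD('n) capCG eps M zeta) 0 CARD('n)"

definition meo_direction :: "real^'n \<Rightarrow> real^'n^'n \<Rightarrow> real \<Rightarrow> real \<Rightarrow> real^'n \<Rightarrow> bool" where
  "meo_direction g H eps delta s \<longleftrightarrow>
     (\<exists>v. norm v = 1 \<and> v \<bullet> (H *v v) \<le> - eps / 2 \<and> (s = delta *\<^sub>R v \<or> s = - (delta *\<^sub>R v)))
     \<and> g \<bullet> s \<le> 0 \<and> s \<bullet> (H *v s) \<le> - (1/2) * eps * (norm s)\<^sup>2 \<and> norm s = delta"

definition model_red :: "real^'n \<Rightarrow> real^'n^'n \<Rightarrow> real^'n \<Rightarrow> real" where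
  "model_red gk Hk s = - (gk \<bullet> s + 1/2 * (s \<bullet> (Hk *v s)))"

definition tr_rho :: "(real^'n \<Rightarrow> real) \<Rightarrow> (real^'n \<Rightarrow> real^'n) \<Rightarrow> (real^'n \<Rightarrow> real^'n^'n)
                      \<Rightarrow> (nat \<Rightarrow> real^'n) \<Rightarrow> (nat \<Rightarrow> real^'n) \<Rightarrow> nat \<Rightarrow> real" where
  "tr_rho f g H x s k = (f (x k) - f (x k + s k)) / model_red (g (x k)) (H (x k)) (s k)"

definition cg_call :: "(real^'n \<Rightarrow> real^'n) \<Rightarrow> (real^'n \<Rightarrow> real^'n^'n) \<Rightarrow> real \<Rightarrow> real \<Rightarrow> bool \<Rightarrow> real
                       \<Rightarrow> real^'n \<Rightarrow> real \<Rightarrow> (real^'n) \<times> cg_flag" where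
  "cg_call g H epsH zeta capCG M xk deltak =
     (if g xk \<noteq> 0 then truncated_cg (g xk) (H xk) epsH deltak zeta capCG M else (0, INT_RES))"

definition cg_accepted :: "real \<Rightarrow> real^'n \<Rightarrow> cg_flag \<Rightarrow> bool" where
  "cg_accepted epsg gk out \<longleftrightarrow> out = BND_NEG \<or> out = BND_NORM \<or> (norm gk > epsg \<and> out = INT_RES)"

text \<open>A realization of a run of Algorithm 4: iterates x k, radii delta k, steps s k;
  T (possibly infinite) is the number of completed iterations, i.e. the index
  set K is {k. k < T}; if T is finite, iteration T terminates (MEO reports
  H \<succeq> - epsH I, which for a randomized oracle may occur at any MEO call).\<close>
definition alg4_run ::
  "(real^'n \<Rightarrow> real) \<Rightarrow> (real^'n \<Rightarrow> real^'n) \<Rightarrow> (real^'n \<Rightarrow> real^'n^'n)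
   \<Rightarrow> real \<Rightarrow> real \<Rightarrow> real \<Rightarrow> real \<Rightarrow> real \<Rightarrow> real^'n \<Rightarrow> real \<Rightarrow> real \<Rightarrow> real \<Rightarrow> real \<Rightarrow> bool \<Rightarrow> real
   \<Rightarrow> (nat \<Rightarrow> real^'n) \<Rightarrow> (nat \<Rightarrow> real) \<Rightarrow> (nat \<Rightarrow> real^'n) \<Rightarrow> enat \<Rightarrow> bool" where
  "alg4_run f g H epsg epsH gamma1 gamma2 psi x0 delta0 deltamax eta zeta capCG M x delta s T \<longleftrightarrow>
     x 0 = x0 \<and> delta 0 = delta0 \<and>
     (\<forall>k. enat k < T \<longrightarrow>
        (let (sCG, out) = cg_call g H epsH zeta capCG M (x k) (delta k)
         in (if cg_accepted epsg (g (x k)) out then s k = sCG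
             else meo_direction (g (x k)) (H (x k)) epsH (delta k) (s k)))
        \<and> (if tr_rho f g H x s k \<ge> eta
           then x (Suc k) = x k + s k \<and>
                delta (Suc k) = (if norm (s k) \<ge> psi * delta k then min (gamma2 * delta k) deltamax
                                 else delta k)
           else x (Suc k) = x k \<and> delta (Suc k) = gamma1 * norm (s k))) \<and>
     (\<forall>t. T = enat t \<longrightarrow>
        \<not> cg_accepted epsg (g (x t)) (snd (cg_call g H epsH zeta capCG M (x t) (delta t))))"

end

theory Submission
  imports Defs
begin



locale cgs =
  fixes g :: "real^'n" and H :: "real^'n^'n" and e :: real
  assumes symH: "\<And>u v. u \<bullet> (H *v v) = v \<bullet> (H *v u)"
begin

definition Am :: "real^'n \<Rightarrow> real^'n" where "Am v = H *v v + (2*e) *\<^sub>R v"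
definition cy where "cy j = fst (cg_seq g H e j)"
definition cr where "cr j = fst (snd (cg_seq g H e j))"
definition cp where "cp j = snd (snd (cg_seq g H e j))"
definition ca where "ca j = (norm (cr j))\<^sup>2 / (cp j \<bullet> Am (cp j))"
definition cb where "cb j = (norm (cr (Suc j)))\<^sup>2 / (norm (cr j))\<^sup>2"

lemma cg0: "cy 0 = 0" "cr 0 = g" "cp 0 = - g"
  by (simp_all add: cy_def cr_def cp_def)

lemma cg_rec:
  "cy (Suc j) = cy j + ca j *\<^sub>R cp j"
  "cr (Suc j) = cr j + ca j *\<^sub>R Am (cp j)"
  "cp (Suc j) = - cr (Suc j) + cb j *\<^sub>R cp j"
  by (simp_all add: cy_def cr_def cp_def ca_def cb_def Am_def Let_def split: prod.splits)

lemma Am_sym: "u \<bullet> Am v = v \<bullet> Am u"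
  unfolding Am_def by (simp add: inner_add_right symH inner_commute)

lemma Am_left: "Am u \<bullet> v = u \<bullet> Am v"
  by (metis Am_sym inner_commute)

lemma Am_lin: "Am (a + b) = Am a + Am b" "Am (c *\<^sub>R a) = c *\<^sub>R Am a" "Am (- a) = - Am a"
  "Am 0 = 0"
  unfolding Am_def by (simp_all add: algebra_simps matrix_vector_mult_scaleR)
    (metis matrix_vector_mult_scaleR scaleR_minus1_left)

lemma r_eq: "cr j = g + Am (cy j)"
  by (induction j) (simp_all add: cg0 cg_rec Am_lin)

definition good where "good J \<longleftrightarrow> (\<forall>i<J. cp i \<bullet> Am (cp i) > 0) \<and> (\<forall>i\<le>J. cr i \<noteq> 0)"

lemma good_Suc: "good (Suc J) \<Longrightarrow> good J"
  unfolding good_def by auto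

lemma ca_mult: "cp j \<bullet> Am (cp j) \<noteq> 0 \<Longrightarrow> ca j * (cp j \<bullet> Am (cp j)) = (norm (cr j))\<^sup>2"
  unfolding ca_def by simp

lemma rp_next:
  assumes "cp j \<bullet> Am (cp j) \<noteq> 0" "cr j \<bullet> cp j = - (norm (cr j))\<^sup>2"
  shows "cr (Suc j) \<bullet> cp j = 0"
proof -
  have "cr (Suc j) \<bullet> cp j = cr j \<bullet> cp j + ca j * (cp j \<bullet> Am (cp j))"
    by (simp add: cg_rec inner_add_left Am_left)
  then show ?thesis using assms ca_mult by simp
qed

lemma rp: "(\<forall>i<j. cp i \<bullet> Am (cp i) \<noteq> 0) \<Longrightarrow> cr j \<bullet> cp j = - (norm (cr j))\<^sup>2"
proof (induction j)
  case 0
  then show ?case by (simp add: cg0 power2_norm_eq_inner)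
next
  case (Suc j)
  then have a: "cr (Suc j) \<bullet> cp j = 0" using rp_next by simp
  show ?case
    by (simp add: cg_rec(3)[of j] inner_add_right inner_diff_right a power2_norm_eq_inner)
qed

lemma r_as_p: "cr 0 = - cp 0" "cr (Suc i) = cb i *\<^sub>R cp i - cp (Suc i)"
  by (simp_all add: cg0 cg_rec(3))

lemma ca_pos: "good J \<Longrightarrow> j < J \<Longrightarrow> ca j > 0"
  unfolding good_def ca_def by auto

lemma orth: "good J \<Longrightarrow> \<forall>i\<le>J. \<forall>k\<le>J. i \<noteq> k \<longrightarrow> cr i \<bullet> cr k = 0 \<and> cp i \<bullet> Am (cp k) = 0"
proof (induction J)
  case 0
  then show ?case by simp
next
  case (Suc J)
  have gJ: "good J" using Suc.prems good_Suc by blast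
  have IH: "\<And>i k. i \<le> J \<Longrightarrow> k \<le> J \<Longrightarrow> i \<noteq> k \<Longrightarrow> cr i \<bullet> cr k = 0 \<and> cp i \<bullet> Am (cp k) = 0"
    using Suc.IH gJ by blast
  have pApJ: "cp J \<bullet> Am (cp J) > 0" and rJ: "cr J \<noteq> 0" and rSJ: "cr (Suc J) \<noteq> 0"
    using Suc.prems unfolding good_def by auto
  have caJ: "ca J * (cp J \<bullet> Am (cp J)) = (norm (cr J))\<^sup>2" using ca_mult pApJ by simp
  have A: "cr (Suc J) \<bullet> cr i = 0" if "i \<le> J" for i
  proof -
    have e1: "cr (Suc J) \<bullet> cr i = cr J \<bullet> cr i + ca J * (Am (cp J) \<bullet> cr i)"
      by (simp add: cg_rec inner_add_left)
    have e2: "Am (cp J) \<bullet> cr i = - (cp J \<bullet> Am (cp i)) + (if i = 0 then 0 else cb (i - 1) * (cp J \<bullet> Am (cp (i - 1))))"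
    proof (cases i)
      case 0
      then show ?thesis by (simp add: r_as_p Am_left)
    next
      case (Suc i')
      then show ?thesis by (simp add: r_as_p inner_diff_right Am_left)
    qed
    show ?thesis
    proof (cases "i = J")
      case True
      have "(if i = 0 then 0 else cb (i - 1) * (cp J \<bullet> Am (cp (i - 1)))) = 0"
        using IH[of J "J - 1"] True by auto
      then show ?thesis using e1 e2 True caJ by (simp add: power2_norm_eq_inner)
    next
      case False
      then have "i < J" using that by simp
      moreover have "(if i = 0 then 0 else cb (i - 1) * (cp J \<bullet> Am (cp (i - 1)))) = 0"
        using IH[of J "i - 1"] \<open>i < J\<close> by auto
      ultimately show ?thesis using e1 e2 IH[of J i] IH[of i J] by (simp add: inner_commute)
    qed
  qed
  have B: "cp (Suc J) \<bullet> Am (cp i) = 0" if "i \<le> J" for i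
  proof -
    have e1: "cp (Suc J) \<bullet> Am (cp i) = - (cr (Suc J) \<bullet> Am (cp i)) + cb J * (cp J \<bullet> Am (cp i))"
      by (simp add: cg_rec(3)[of J] inner_add_left inner_diff_left)
    have cai: "ca i \<noteq> 0" using ca_pos[OF Suc.prems, of i] that by simp
    have e2: "Am (cp i) = (1 / ca i) *\<^sub>R (cr (Suc i) - cr i)"
      using cai by (simp add: cg_rec)
    have e3: "cr (Suc J) \<bullet> Am (cp i) = (1 / ca i) * (cr (Suc J) \<bullet> cr (Suc i) - cr (Suc J) \<bullet> cr i)"
      by (subst e2) (simp add: inner_diff_right)
    show ?thesis
    proof (cases "i = J")
      case True
      have "cr (Suc J) \<bullet> Am (cp J) = (1 / ca J) * (norm (cr (Suc J)))\<^sup>2"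
        using e3 True A[of J] by (simp add: power2_norm_eq_inner)
      moreover have "cb J * (cp J \<bullet> Am (cp J)) = (1 / ca J) * (norm (cr (Suc J)))\<^sup>2"
      proof -
        have "1 / ca J = (cp J \<bullet> Am (cp J)) / (norm (cr J))\<^sup>2" by (simp add: ca_def)
        moreover have "cb J * (cp J \<bullet> Am (cp J)) = (norm (cr (Suc J)))\<^sup>2 * ((cp J \<bullet> Am (cp J)) / (norm (cr J))\<^sup>2)"
          by (simp add: cb_def)
        ultimately show ?thesis by simp
      qed
      ultimately show ?thesis using e1 True by simp
    next
      case False
      then have "i < J" using that by simp
      then have "cr (Suc J) \<bullet> Am (cp i) = 0" using e3 A[of "Suc i"] A[of i] by simp
      then show ?thesis using e1 IH[of J i] \<open>i < J\<close> by simp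
    qed
  qed
  show ?case
  proof (intro allI impI)
    fix i k assume ik: "i \<le> Suc J" "k \<le> Suc J" "i \<noteq> k"
    show "cr i \<bullet> cr k = 0 \<and> cp i \<bullet> Am (cp k) = 0"
    proof (cases "i = Suc J")
      case True
      then show ?thesis using ik A B by simp
    next
      case False
      note iF = False
      show ?thesis
      proof (cases "k = Suc J")
        case True
        then show ?thesis using ik iF A[of i] B[of i] inner_commute[of "cr i" "cr (Suc J)"] Am_sym[of "cp i" "cp (Suc J)"] by simp
      next
        case False
        then show ?thesis using ik iF IH by simp
      qed
    qed
  qed
qed

lemma rk_pi: "good J \<Longrightarrow> k \<le> J \<Longrightarrow> i < k \<Longrightarrow> cr k \<bullet> cp i = 0"
proof (induction i)
  case 0
  have "cp 0 = - cr 0" by (simp add: cg0)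
  then have "cr k \<bullet> cp 0 = - (cr k \<bullet> cr 0)" by simp
  moreover have "cr k \<bullet> cr 0 = 0" using orth[OF 0(1)] 0(2,3) by blast
  ultimately show ?case by simp
next
  case (Suc i)
  have "cr k \<bullet> cp (Suc i) = - (cr k \<bullet> cr (Suc i)) + cb i * (cr k \<bullet> cp i)"
    by (simp add: cg_rec(3)[of i] inner_add_right inner_diff_right)
  then show ?case using Suc orth[OF Suc(2)] by simp
qed

lemma y_r: "good J \<Longrightarrow> k \<le> J \<Longrightarrow> i \<le> k \<Longrightarrow> cy i \<bullet> cr k = 0"
proof (induction i)
  case 0
  then show ?case by (simp add: cg0)
next
  case (Suc i)
  have "cy (Suc i) \<bullet> cr k = cy i \<bullet> cr k + ca i * (cr k \<bullet> cp i)"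
    by (simp add: cg_rec(1)[of i] inner_add_left) (simp add: inner_commute)
  then show ?case using Suc rk_pi[OF Suc(2,3), of i] by simp
qed

lemma yp_nonneg: "good J \<Longrightarrow> j \<le> J \<Longrightarrow> cy j \<bullet> cp j \<ge> 0"
proof (induction j)
  case 0
  then show ?case by (simp add: cg0)
next
  case (Suc j)
  have "cy (Suc j) \<bullet> cp (Suc j) = - (cy (Suc j) \<bullet> cr (Suc j)) + cb j * (cy j \<bullet> cp j + ca j * (cp j \<bullet> cp j))"
  proof -
    have "cy (Suc j) \<bullet> cp (Suc j) = - (cy (Suc j) \<bullet> cr (Suc j)) + cb j * (cy (Suc j) \<bullet> cp j)"
      by (simp only: cg_rec(3)[of j] inner_add_right inner_minus_right inner_scaleR_right)
    moreover have "cy (Suc j) \<bullet> cp j = cy j \<bullet> cp j + ca j * (cp j \<bullet> cp j)"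
      by (simp only: cg_rec(1)[of j] inner_add_left inner_scaleR_left)
    ultimately show ?thesis by simp
  qed
  moreover have "cy (Suc j) \<bullet> cr (Suc j) = 0" using y_r Suc by simp
  moreover have "cb j \<ge> 0" unfolding cb_def by simp
  moreover have "ca j \<ge> 0" using ca_pos[OF Suc(2), of j] Suc(3) by simp
  moreover have "cy j \<bullet> cp j \<ge> 0" using Suc by simp
  ultimately show ?case by simp
qed

definition Qf where "Qf y = g \<bullet> y + 1/2 * (y \<bullet> Am y)"

lemma Q_line:
  assumes "cr j \<bullet> cp j = - (norm (cr j))\<^sup>2"
  shows "Qf (cy j + s *\<^sub>R cp j) = Qf (cy j) - s * (norm (cr j))\<^sup>2 + 1/2 * s\<^sup>2 * (cp j \<bullet> Am (cp j))"
proof -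
  have "cr j \<bullet> cp j = g \<bullet> cp j + cy j \<bullet> Am (cp j)"
    by (simp add: r_eq inner_add_left Am_left)
  then have gp: "g \<bullet> cp j + cy j \<bullet> Am (cp j) = - (norm (cr j))\<^sup>2" using assms by simp
  have "Qf (cy j + s *\<^sub>R cp j) = Qf (cy j) + s * (g \<bullet> cp j + cy j \<bullet> Am (cp j)) + 1/2 * s\<^sup>2 * (cp j \<bullet> Am (cp j))"
    unfolding Qf_def using Am_sym[of "cp j" "cy j"] by (simp add: Am_lin inner_add_left inner_add_right Am_left algebra_simps power2_eq_square)
  then show ?thesis using gp by simp
qed

lemma Q_nonpos: "good J \<Longrightarrow> j \<le> J \<Longrightarrow> Qf (cy j) \<le> 0"
proof (induction j)
  case 0
  then show ?case by (simp add: cg0 Qf_def Am_lin)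
next
  case (Suc j)
  have pAp: "cp j \<bullet> Am (cp j) > 0" using Suc(2,3) unfolding good_def by auto
  have "\<forall>i<j. cp i \<bullet> Am (cp i) \<noteq> 0"
  proof (intro allI impI)
    fix i assume "i < j"
    then have "i < J" using Suc(3) by simp
    then show "cp i \<bullet> Am (cp i) \<noteq> 0" using Suc(2) unfolding good_def by force
  qed
  then have rp': "cr j \<bullet> cp j = - (norm (cr j))\<^sup>2"
    using rp[of j] by blast
  have "Qf (cy (Suc j)) = Qf (cy j) - ca j * (norm (cr j))\<^sup>2 + 1/2 * (ca j)\<^sup>2 * (cp j \<bullet> Am (cp j))"
    using Q_line[OF rp'] by (simp add: cg_rec(1))
  also have "\<dots> = Qf (cy j) - 1/2 * ca j * (norm (cr j))\<^sup>2"
    using ca_mult[of j] pAp by (simp add: power2_eq_square algebra_simps)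
  also have "\<dots> \<le> Qf (cy j)" using ca_pos[OF Suc(2), of j] Suc(3) by simp
  finally show ?case using Suc by simp
qed

lemma Q_step:
  assumes "cr j \<bullet> cp j = - (norm (cr j))\<^sup>2" "cp j \<bullet> Am (cp j) > 0"
  shows "Qf (cy (Suc j)) = Qf (cy j) - 1/2 * ca j * (norm (cr j))\<^sup>2"
proof -
  have "Qf (cy (Suc j)) = Qf (cy j) - ca j * (norm (cr j))\<^sup>2 + 1/2 * (ca j)\<^sup>2 * (cp j \<bullet> Am (cp j))"
    using Q_line[OF assms(1)] by (simp add: cg_rec(1))
  also have "\<dots> = Qf (cy j) - 1/2 * ca j * (norm (cr j))\<^sup>2"
    using ca_mult[of j] assms(2) by (simp add: power2_eq_square algebra_simps)
  finally show ?thesis .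
qed

lemma seq_eq: "cg_seq g H e j = (cy j, cr j, cp j)"
  by (simp add: cy_def cr_def cp_def)

lemma bnd_exists:
  fixes y p :: "real^'n" and d :: real
  assumes "norm y < d" "p \<noteq> 0"
  shows "\<exists>sg. sg \<ge> 0 \<and> norm (y + sg *\<^sub>R p) = d"
proof -
  define T where "T = (d + norm y) / norm p"
  have np: "norm p > 0" using assms by simp
  have dy: "d + norm y \<ge> 0" using assms(1) norm_ge_zero[of y] by linarith
  then have T0: "T \<ge> 0" unfolding T_def using np by simp
  have "norm (y + T *\<^sub>R p) \<ge> norm (T *\<^sub>R p) - norm y"
    by (metis add.commute norm_diff_ineq diff_minus_eq_add norm_minus_cancel)
  moreover have "norm (T *\<^sub>R p) = d + norm y" unfolding T_def using np dy by simp
  ultimately have hT: "d \<le> norm (y + T *\<^sub>R p)" by simp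
  have "\<exists>x. 0 \<le> x \<and> x \<le> T \<and> norm (y + x *\<^sub>R p) = d"
    apply (rule IVT'[of "\<lambda>t. norm (y + t *\<^sub>R p)"])
    using assms(1) hT T0 by (auto intro!: continuous_intros)
  then show ?thesis by blast
qed

lemma to_bnd_prop:
  fixes y p :: "real^'n" and d :: real
  assumes "norm y < d" "p \<noteq> 0"
  shows "\<exists>sg. sg \<ge> 0 \<and> norm (y + sg *\<^sub>R p) = d \<and> to_bnd y p d = y + sg *\<^sub>R p"
proof -
  let ?sg = "SOME sg. sg \<ge> 0 \<and> norm (y + sg *\<^sub>R p) = d"
  have "?sg \<ge> 0 \<and> norm (y + ?sg *\<^sub>R p) = d"
    using someI_ex[OF bnd_exists[OF assms]] .
  then show ?thesis unfolding to_bnd_def by blast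
qed

lemma norm_line_sq: "(norm (y + t *\<^sub>R p))\<^sup>2 = (norm y)\<^sup>2 + 2 * t * (y \<bullet> p) + t\<^sup>2 * (norm p)\<^sup>2"
  unfolding power2_norm_eq_inner by (simp add: inner_add_left inner_add_right inner_commute power2_eq_square algebra_simps)

lemma loop_eq:
  "cg_loop g H e delta zeta kmax j (Suc fuel) =
    (if \<not> real j < kmax then (cy j, INT_MAX)
     else if cp j \<bullet> Am (cp j) \<le> e * (norm (cp j))\<^sup>2 then (to_bnd (cy j) (cp j) delta, BND_NEG)
     else if norm (cy (Suc j)) \<ge> delta then (to_bnd (cy j) (cp j) delta, BND_NORM)
     else if norm (cr (Suc j)) \<le> zeta / 2 * min (norm g) (e * norm (cy (Suc j))) then (cy (Suc j), INT_RES)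
     else cg_loop g H e delta zeta kmax (Suc j) fuel)"
  by (simp only: cg_loop.simps seq_eq Let_def Am_def prod.case)

lemma loop:
  assumes e: "e > 0" and z: "zeta \<ge> 0" and d: "delta > 0"
  shows "good j \<Longrightarrow> (\<forall>i<j. cp i \<bullet> Am (cp i) > e * (norm (cp i))\<^sup>2) \<Longrightarrow> norm (cy j) < delta
    \<Longrightarrow> cg_loop g H e delta zeta kmax j fuel = (s, fl) \<Longrightarrow> fl \<noteq> INT_MAX
    \<Longrightarrow> 0 < norm s \<and> norm s \<le> delta \<and> Qf s \<le> e/2 * (norm s)\<^sup>2"
proof (induction fuel arbitrary: j)
  case 0
  then show ?case by simp
next
  case (Suc fuel)
  have gj: "good j" and hp: "\<forall>i<j. cp i \<bullet> Am (cp i) > e * (norm (cp i))\<^sup>2" and ny: "norm (cy j) < delta"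
    using Suc.prems by auto
  have rj: "cr j \<noteq> 0" using gj unfolding good_def by simp
  have rpj: "cr j \<bullet> cp j = - (norm (cr j))\<^sup>2" using rp[of j] gj unfolding good_def by force
  have pj: "cp j \<noteq> 0" using rpj rj by auto
  have Qy: "Qf (cy j) \<le> 0" using Q_nonpos[OF gj] by simp
  have ypj: "cy j \<bullet> cp j \<ge> 0" using yp_nonneg[OF gj] by simp
  note res = Suc.prems(4)[unfolded loop_eq]
  show ?case
  proof (cases "real j < kmax")
    case False
    then show ?thesis using res Suc.prems(5) by simp
  next
    case kT: True
    show ?thesis
    proof (cases "cp j \<bullet> Am (cp j) \<le> e * (norm (cp j))\<^sup>2")
      case neg: True
      then have sdef: "s = to_bnd (cy j) (cp j) delta" using res kT by simp
      obtain sg where sg: "sg \<ge> 0" "norm (cy j + sg *\<^sub>R cp j) = delta" "to_bnd (cy j) (cp j) delta = cy j + sg *\<^sub>R cp j"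
        using to_bnd_prop[OF ny pj] by blast
      have Qs: "Qf s = Qf (cy j) - sg * (norm (cr j))\<^sup>2 + 1/2 * sg\<^sup>2 * (cp j \<bullet> Am (cp j))"
        using Q_line[OF rpj] sdef sg(3) by simp
      have "1/2 * sg\<^sup>2 * (cp j \<bullet> Am (cp j)) \<le> 1/2 * sg\<^sup>2 * (e * (norm (cp j))\<^sup>2)"
        using neg by (simp add: mult_left_mono)
      also have "\<dots> = e / 2 * (sg\<^sup>2 * (norm (cp j))\<^sup>2)" by simp
      finally have "1/2 * sg\<^sup>2 * (cp j \<bullet> Am (cp j)) \<le> e / 2 * (sg\<^sup>2 * (norm (cp j))\<^sup>2)" .
      moreover have "sg * (norm (cr j))\<^sup>2 \<ge> 0" using sg(1) by simp
      ultimately have Q1: "Qf s \<le> e / 2 * (sg\<^sup>2 * (norm (cp j))\<^sup>2)" using Qs Qy by linarith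
      have "(norm s)\<^sup>2 = (norm (cy j))\<^sup>2 + 2 * sg * (cy j \<bullet> cp j) + sg\<^sup>2 * (norm (cp j))\<^sup>2"
        using sdef sg(3) norm_line_sq by simp
      moreover have "2 * sg * (cy j \<bullet> cp j) \<ge> 0" using sg(1) ypj by simp
      ultimately have "sg\<^sup>2 * (norm (cp j))\<^sup>2 \<le> (norm s)\<^sup>2" by simp
      then have "e / 2 * (sg\<^sup>2 * (norm (cp j))\<^sup>2) \<le> e / 2 * (norm s)\<^sup>2" using e by simp
      then show ?thesis using Q1 sdef sg d by simp
    next
      case pos: False
      then have pApj: "cp j \<bullet> Am (cp j) > e * (norm (cp j))\<^sup>2" by simp
      have pAp0: "cp j \<bullet> Am (cp j) > 0" using pApj e
        by (smt (verit) mult_nonneg_nonneg zero_le_power2)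
      have ca0: "ca j > 0" using pAp0 rj unfolding ca_def by simp
      show ?thesis
      proof (cases "norm (cy (Suc j)) \<ge> delta")
        case nrm: True
        then have sdef: "s = to_bnd (cy j) (cp j) delta" using res kT pos by simp
        obtain sg where sg: "sg \<ge> 0" "norm (cy j + sg *\<^sub>R cp j) = delta" "to_bnd (cy j) (cp j) delta = cy j + sg *\<^sub>R cp j"
          using to_bnd_prop[OF ny pj] by blast
        have sgle: "sg \<le> ca j"
        proof (rule ccontr)
          assume "\<not> sg \<le> ca j"
          then have lt: "ca j < sg" by simp
          have a1: "(norm (cy j + sg *\<^sub>R cp j))\<^sup>2 = (norm (cy j))\<^sup>2 + 2 * sg * (cy j \<bullet> cp j) + sg\<^sup>2 * (norm (cp j))\<^sup>2"
            by (rule norm_line_sq)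
          have a2: "(norm (cy (Suc j)))\<^sup>2 = (norm (cy j))\<^sup>2 + 2 * ca j * (cy j \<bullet> cp j) + (ca j)\<^sup>2 * (norm (cp j))\<^sup>2"
            by (simp add: cg_rec(1) norm_line_sq)
          have "2 * ca j * (cy j \<bullet> cp j) \<le> 2 * sg * (cy j \<bullet> cp j)"
            using lt ypj by (simp add: mult_right_mono)
          moreover have "(ca j)\<^sup>2 * (norm (cp j))\<^sup>2 < sg\<^sup>2 * (norm (cp j))\<^sup>2"
            using lt ca0 pj by (simp add: power_strict_mono)
          ultimately have "(norm (cy (Suc j)))\<^sup>2 < delta\<^sup>2" using a1 a2 sg(2) by simp
          moreover have "delta\<^sup>2 \<le> (norm (cy (Suc j)))\<^sup>2" using nrm d by (simp add: power_mono)
          ultimately show False by simp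
        qed
        have Qs: "Qf s = Qf (cy j) - sg * (norm (cr j))\<^sup>2 + 1/2 * sg\<^sup>2 * (cp j \<bullet> Am (cp j))"
          using Q_line[OF rpj] sdef sg(3) by simp
        have "sg\<^sup>2 * (cp j \<bullet> Am (cp j)) \<le> sg * (ca j * (cp j \<bullet> Am (cp j)))"
          using mult_left_mono[OF mult_right_mono[OF sgle less_imp_le[OF pAp0]] sg(1)]
          by (simp add: power2_eq_square mult.assoc)
        then have "sg\<^sup>2 * (cp j \<bullet> Am (cp j)) \<le> sg * (norm (cr j))\<^sup>2"
          using ca_mult[of j] pAp0 by simp
        moreover have "sg * (norm (cr j))\<^sup>2 \<ge> 0" using sg(1) by simp
        ultimately have "Qf s \<le> 0" using Qs Qy by linarith
        moreover have "e/2 * (norm s)\<^sup>2 \<ge> 0" using e by simp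
        ultimately show ?thesis using sdef sg d by simp
      next
        case nrm: False
        show ?thesis
        proof (cases "norm (cr (Suc j)) \<le> zeta / 2 * min (norm g) (e * norm (cy (Suc j)))")
          case True
          then have sdef: "s = cy (Suc j)" using res kT pos nrm by simp
          have "Qf s = Qf (cy j) - 1/2 * ca j * (norm (cr j))\<^sup>2" using Q_step[OF rpj pAp0] sdef by simp
          moreover have "1/2 * ca j * (norm (cr j))\<^sup>2 > 0" using ca0 rj by simp
          ultimately have Qs: "Qf s < 0" using Qy by simp
          then have "s \<noteq> 0" by (auto simp: Qf_def Am_lin)
          moreover have "e/2 * (norm s)\<^sup>2 \<ge> 0" using e by simp
          ultimately show ?thesis using sdef nrm Qs by simp
        next
          case False
          then have rec: "cg_loop g H e delta zeta kmax (Suc j) fuel = (s, fl)" using res kT pos nrm by simp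
          have "0 \<le> zeta / 2 * min (norm g) (e * norm (cy (Suc j)))" using z e by simp
          then have "cr (Suc j) \<noteq> 0" using False by auto
          then have g1: "good (Suc j)" using gj pAp0 unfolding good_def
            by (metis le_Suc_eq less_Suc_eq)
          have h1: "\<forall>i<Suc j. cp i \<bullet> Am (cp i) > e * (norm (cp i))\<^sup>2" using hp pApj less_Suc_eq by auto
          show ?thesis using Suc.IH[OF g1 h1 _ rec Suc.prems(5)] nrm by simp
        qed
      qed
    qed
  qed
qed

end



lemma line_deriv:
  fixes F :: "real^'n \<Rightarrow> real"
  assumes "(F has_derivative (\<lambda>h. Dv \<bullet> h)) (at (a + t *\<^sub>R b))"
  shows "((\<lambda>t. F (a + t *\<^sub>R b)) has_real_derivative (Dv \<bullet> b)) (at t)"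
proof -
  have l: "((\<lambda>t. a + t *\<^sub>R b) has_derivative (\<lambda>h. h *\<^sub>R b)) (at t)"
    by (auto intro!: derivative_eq_intros)
  have "((\<lambda>t. F (a + t *\<^sub>R b)) has_derivative (\<lambda>h. Dv \<bullet> (h *\<^sub>R b))) (at t)"
    using has_derivative_compose[OF l assms] .
  moreover have "(\<lambda>h. Dv \<bullet> (h *\<^sub>R b)) = (*) (Dv \<bullet> b)" by (auto simp: mult.commute)
  ultimately show ?thesis unfolding has_field_derivative_def by simp
qed

lemma line_deriv2:
  fixes G :: "real^'n \<Rightarrow> real^'n"
  assumes "(G has_derivative (\<lambda>h. M *v h)) (at (a + t *\<^sub>R b))"
  shows "((\<lambda>t. G (a + t *\<^sub>R b) \<bullet> c) has_real_derivative ((M *v b) \<bullet> c)) (at t)"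
proof -
  have l: "((\<lambda>t. a + t *\<^sub>R b) has_derivative (\<lambda>h. h *\<^sub>R b)) (at t)"
    by (auto intro!: derivative_eq_intros)
  have "((\<lambda>t. G (a + t *\<^sub>R b)) has_derivative (\<lambda>h. M *v (h *\<^sub>R b))) (at t)"
    using has_derivative_compose[OF l assms] .
  then have "((\<lambda>t. G (a + t *\<^sub>R b) \<bullet> c) has_derivative (\<lambda>h. (M *v (h *\<^sub>R b)) \<bullet> c)) (at t)"
    by (rule has_derivative_inner_left)
  moreover have "(\<lambda>h. (M *v (h *\<^sub>R b)) \<bullet> c) = (*) ((M *v b) \<bullet> c)"
    by (auto simp: matrix_vector_mult_scaleR mult.commute)
  ultimately show ?thesis unfolding has_field_derivative_def by simp
qed

lemma hess_sym_approx:
  fixes f :: "real^'n \<Rightarrow> real" and g :: "real^'n \<Rightarrow> real^'n"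
  assumes ball: "ball x d \<subseteq> Om" and fd: "\<forall>y\<in>Om. (f has_derivative (\<lambda>h. g y \<bullet> h)) (at y)"
    and gapx: "\<forall>y. norm (y - x) < d \<longrightarrow> norm (g y - g x - Hx *v (y - x)) \<le> e * norm (y - x)"
    and t: "t > 0" "t * (norm u + norm v) < d" and e0: "e \<ge> 0"
  shows "\<bar>(f (x + t *\<^sub>R u + t *\<^sub>R v) - f (x + t *\<^sub>R u) - f (x + t *\<^sub>R v) + f x) - t\<^sup>2 * (u \<bullet> (Hx *v v))\<bar>
         \<le> e * t\<^sup>2 * (norm u * (2 * norm u + norm v))"
proof -
  define psi where "psi a = f (x + t *\<^sub>R v + a *\<^sub>R u) - f (x + a *\<^sub>R u)" for a
  define dpsi where "dpsi a = g (x + t *\<^sub>R v + a *\<^sub>R u) \<bullet> u - g (x + a *\<^sub>R u) \<bullet> u" for a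
  have inball: "x + w \<in> Om" if "norm w < d" for w
    using ball that by (auto simp: dist_norm)
  have nu: "a * norm u < d" if "0 \<le> a" "a \<le> t" for a
  proof -
    have "a * norm u \<le> t * norm u" using that by (simp add: mult_right_mono)
    also have "\<dots> \<le> t * (norm u + norm v)" using t by (simp add: mult_left_mono)
    finally show ?thesis using t by simp
  qed
  have nuv: "norm (t *\<^sub>R v + a *\<^sub>R u) \<le> t * (norm u + norm v)" if "0 \<le> a" "a \<le> t" for a
  proof -
    have "norm (t *\<^sub>R v + a *\<^sub>R u) \<le> t * norm v + a * norm u"
      using norm_triangle_ineq[of "t *\<^sub>R v" "a *\<^sub>R u"] t that by simp
    also have "\<dots> \<le> t * norm v + t * norm u" using that by (simp add: mult_right_mono)
    finally show ?thesis by (simp add: algebra_simps)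
  qed
  have der: "(psi has_real_derivative dpsi a) (at a)" if "0 \<le> a" "a \<le> t" for a
  proof -
    have p1: "x + t *\<^sub>R v + a *\<^sub>R u \<in> Om"
      using inball[of "t *\<^sub>R v + a *\<^sub>R u"] nuv[OF that] t by (simp add: add.assoc)
    have p2: "x + a *\<^sub>R u \<in> Om" using inball[of "a *\<^sub>R u"] nu[OF that] that by simp
    have "((\<lambda>a. f (x + t *\<^sub>R v + a *\<^sub>R u)) has_real_derivative (g (x + t *\<^sub>R v + a *\<^sub>R u) \<bullet> u)) (at a)"
      by (rule line_deriv) (use fd p1 in blast)
    moreover have "((\<lambda>a. f (x + a *\<^sub>R u)) has_real_derivative (g (x + a *\<^sub>R u) \<bullet> u)) (at a)"
      by (rule line_deriv) (use fd p2 in blast)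
    ultimately show ?thesis unfolding psi_def dpsi_def by (rule DERIV_diff)
  qed
  obtain z where z: "0 < z" "z < t" "psi t - psi 0 = (t - 0) * dpsi z"
    using MVT2[OF t(1), of psi dpsi] der by auto
  have phi: "f (x + t *\<^sub>R u + t *\<^sub>R v) - f (x + t *\<^sub>R u) - f (x + t *\<^sub>R v) + f x = t * dpsi z"
    using z(3) unfolding psi_def by (simp add: algebra_simps)
  define h1 where "h1 = t *\<^sub>R v + z *\<^sub>R u"
  define h2 where "h2 = z *\<^sub>R u"
  define E1 where "E1 = g (x + h1) - g x - Hx *v h1"
  define E2 where "E2 = g (x + h2) - g x - Hx *v h2"
  have nh1: "norm h1 \<le> t * (norm u + norm v)" unfolding h1_def using nuv z by simp
  have nh2: "norm h2 \<le> t * norm u" unfolding h2_def using z by (simp add: mult_right_mono)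
  have nh2': "norm h2 < d" unfolding h2_def using nu[of z] z by simp
  have E1b: "norm E1 \<le> e * norm h1" unfolding E1_def using gapx[rule_format, of "x + h1"] nh1 t by simp
  have E2b: "norm E2 \<le> e * norm h2" unfolding E2_def using gapx[rule_format, of "x + h2"] nh2' by simp
  have "dpsi z = (E1 - E2) \<bullet> u + (Hx *v (h1 - h2)) \<bullet> u"
    unfolding dpsi_def E1_def E2_def h1_def h2_def
    by (simp add: inner_diff_left inner_add_left matrix_vector_right_distrib add.assoc algebra_simps)
  also have "h1 - h2 = t *\<^sub>R v" unfolding h1_def h2_def by simp
  finally have dz: "dpsi z - t * (u \<bullet> (Hx *v v)) = (E1 - E2) \<bullet> u"
    by (simp add: matrix_vector_mult_scaleR inner_commute)
  have "\<bar>(E1 - E2) \<bullet> u\<bar> \<le> norm (E1 - E2) * norm u" by (rule Cauchy_Schwarz_ineq2)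
  also have "\<dots> \<le> (norm E1 + norm E2) * norm u" by (simp add: mult_right_mono norm_triangle_ineq4)
  also have "\<dots> \<le> (e * (t * (norm u + norm v)) + e * (t * norm u)) * norm u"
    apply (rule mult_right_mono) using E1b E2b nh1 nh2 e0
    by (smt (verit) mult_left_mono) simp
  also have "\<dots> = e * t * (norm u * (2 * norm u + norm v))" by (simp add: algebra_simps)
  finally have b: "\<bar>dpsi z - t * (u \<bullet> (Hx *v v))\<bar> \<le> e * t * (norm u * (2 * norm u + norm v))"
    using dz by simp
  have "\<bar>t * dpsi z - t\<^sup>2 * (u \<bullet> (Hx *v v))\<bar> = t * \<bar>dpsi z - t * (u \<bullet> (Hx *v v))\<bar>"
    using t by (simp add: power2_eq_square abs_mult right_diff_distrib[symmetric] mult.assoc)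
  also have "\<dots> \<le> t * (e * t * (norm u * (2 * norm u + norm v)))" using b t by simp
  finally show ?thesis using phi by (simp add: power2_eq_square mult.assoc mult.left_commute)
qed

lemma hess_sym:
  fixes f :: "real^'n \<Rightarrow> real" and g :: "real^'n \<Rightarrow> real^'n"
  assumes "open Om" "x \<in> Om" and fd: "\<forall>y\<in>Om. (f has_derivative (\<lambda>h. g y \<bullet> h)) (at y)"
    and gd: "(g has_derivative (\<lambda>h. Hx *v h)) (at x)"
  shows "u \<bullet> (Hx *v v) = v \<bullet> (Hx *v u)"
proof -
  obtain r where r: "r > 0" "ball x r \<subseteq> Om" using assms(1,2) open_contains_ball by blast
  define C where "C = norm u * (2 * norm u + norm v) + norm v * (2 * norm v + norm u) + 1"
  have "0 \<le> norm u * (2 * norm u + norm v)" "0 \<le> norm v * (2 * norm v + norm u)" by simp_all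
  then have C0: "C > 0" unfolding C_def by linarith
  have key: "\<bar>u \<bullet> (Hx *v v) - v \<bullet> (Hx *v u)\<bar> \<le> 0 + ep" if ep: "ep > 0" for ep
  proof -
    define e where "e = ep / C"
    have e0: "e > 0" unfolding e_def using ep C0 by simp
    obtain d0 where d0: "d0 > 0" "\<forall>y. norm (y - x) < d0 \<longrightarrow> norm (g y - g x - Hx *v (y - x)) \<le> e * norm (y - x)"
      using gd e0 unfolding has_derivative_at_alt by blast
    define d where "d = min d0 r"
    have d: "d > 0" "ball x d \<subseteq> Om" using d0 r unfolding d_def by auto
    have gapx: "\<forall>y. norm (y - x) < d \<longrightarrow> norm (g y - g x - Hx *v (y - x)) \<le> e * norm (y - x)"
      using d0 unfolding d_def by auto
    define t where "t = d / (norm u + norm v + 1)"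
    have pos: "norm u + norm v + 1 > 0" using norm_ge_zero[of u] norm_ge_zero[of v] by linarith
    have t0: "t > 0" unfolding t_def using d pos by simp
    have tl: "t * (norm u + norm v) < d"
    proof -
      have "t * (norm u + norm v) < t * (norm u + norm v + 1)" using t0 by simp
      also have "\<dots> = d" unfolding t_def using pos by simp
      finally show ?thesis .
    qed
    have tl2: "t * (norm v + norm u) < d" using tl by (simp add: add.commute)
    note A1 = hess_sym_approx[OF d(2) fd gapx t0 tl less_imp_le[OF e0]]
    note A2 = hess_sym_approx[where u=v and v=u, OF d(2) fd gapx t0 tl2 less_imp_le[OF e0]]
    have same: "f (x + t *\<^sub>R v + t *\<^sub>R u) - f (x + t *\<^sub>R v) - f (x + t *\<^sub>R u) + f x
       = f (x + t *\<^sub>R u + t *\<^sub>R v) - f (x + t *\<^sub>R u) - f (x + t *\<^sub>R v) + f x"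
      by (simp add: add.assoc add.commute add.left_commute)
    have "t\<^sup>2 * \<bar>u \<bullet> (Hx *v v) - v \<bullet> (Hx *v u)\<bar> = \<bar>t\<^sup>2 * (u \<bullet> (Hx *v v)) - t\<^sup>2 * (v \<bullet> (Hx *v u))\<bar>"
      by (simp add: abs_mult right_diff_distrib[symmetric])
    also have "\<dots> \<le> e * t\<^sup>2 * (norm u * (2 * norm u + norm v)) + e * t\<^sup>2 * (norm v * (2 * norm v + norm u))"
      using A1 A2 same by linarith
    also have "\<dots> \<le> t\<^sup>2 * (e * C)" unfolding C_def using e0 t0 by (simp add: algebra_simps)
    finally have "\<bar>u \<bullet> (Hx *v v) - v \<bullet> (Hx *v u)\<bar> \<le> e * C" using t0 by simp
    then show ?thesis unfolding e_def using C0 by simp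
  qed
  have "\<bar>u \<bullet> (Hx *v v) - v \<bullet> (Hx *v u)\<bar> \<le> 0" by (rule field_le_epsilon) (rule key)
  then show ?thesis by simp
qed

lemma taylor_ub:
  fixes f :: "real^'n \<Rightarrow> real" and g :: "real^'n \<Rightarrow> real^'n" and H :: "real^'n \<Rightarrow> real^'n^'n"
  assumes seg: "closed_segment x (x + s) \<subseteq> Om"
    and fd: "\<forall>y\<in>Om. (f has_derivative (\<lambda>h. g y \<bullet> h)) (at y)"
    and gd: "\<forall>y\<in>Om. (g has_derivative (\<lambda>h. H y *v h)) (at y)"
    and lip: "\<forall>y\<in>Om. \<forall>z\<in>Om. onorm (\<lambda>v. (H y - H z) *v v) \<le> LH * norm (y - z)"
  shows "f (x + s) \<le> f x + g x \<bullet> s + 1/2 * (s \<bullet> (H x *v s)) + LH / 6 * norm s ^ 3"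
proof -
  have inO: "x + t *\<^sub>R s \<in> Om" if "0 \<le> t" "t \<le> 1" for t
  proof -
    have "x + t *\<^sub>R s \<in> closed_segment x (x + s)"
      unfolding in_segment using that by (intro exI[of _ t]) (simp add: algebra_simps)
    then show ?thesis using seg by blast
  qed
  define K where "K = LH * norm s ^ 3"
  define c1 where "c1 = g x \<bullet> s"
  define c2 where "c2 = s \<bullet> (H x *v s)"
  define p1 where "p1 t = g (x + t *\<^sub>R s) \<bullet> s" for t
  define p2 where "p2 t = (H (x + t *\<^sub>R s) *v s) \<bullet> s" for t
  have D1: "((\<lambda>t. f (x + t *\<^sub>R s)) has_real_derivative p1 t) (at t)" if "0 \<le> t" "t \<le> 1" for t
    unfolding p1_def by (rule line_deriv) (use fd inO[OF that] in blast)
  have D2: "(p1 has_real_derivative p2 t) (at t)" if "0 \<le> t" "t \<le> 1" for t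
    unfolding p1_def p2_def by (rule line_deriv2) (use gd inO[OF that] in blast)
  define psi where "psi t = f (x + t *\<^sub>R s) - f x - t * c1 - t\<^sup>2 / 2 * c2 - K * t ^ 3 / 6" for t
  define psi1 where "psi1 t = p1 t - c1 - t * c2 - K * t\<^sup>2 / 2" for t
  define psi2 where "psi2 t = p2 t - c2 - K * t" for t
  have Dpsi: "(psi has_real_derivative psi1 t) (at t)" if "0 \<le> t" "t \<le> 1" for t
    unfolding psi_def psi1_def
    by (auto intro!: derivative_eq_intros D1[OF that] simp: power2_eq_square power3_eq_cube field_simps)
  have Dpsi1: "(psi1 has_real_derivative psi2 t) (at t)" if "0 \<le> t" "t \<le> 1" for t
    unfolding psi1_def psi2_def
    by (auto intro!: derivative_eq_intros D2[OF that] simp: power2_eq_square field_simps)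
  have p2b: "psi2 t \<le> 0" if "0 \<le> t" "t \<le> 1" for t
  proof -
    have bl: "bounded_linear (\<lambda>v. (H (x + t *\<^sub>R s) - H x) *v v)" by simp
    have "p2 t - c2 = ((H (x + t *\<^sub>R s) - H x) *v s) \<bullet> s"
      unfolding p2_def c2_def by (simp add: matrix_vector_mult_diff_rdistrib inner_diff_left inner_diff_right inner_commute)
    also have "\<dots> \<le> norm ((H (x + t *\<^sub>R s) - H x) *v s) * norm s" by (rule norm_cauchy_schwarz)
    also have "\<dots> \<le> (onorm (\<lambda>v. (H (x + t *\<^sub>R s) - H x) *v v) * norm s) * norm s"
      by (rule mult_right_mono[OF onorm[OF bl]]) simp
    also have "\<dots> \<le> (LH * norm ((x + t *\<^sub>R s) - x) * norm s) * norm s"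
    proof -
      have "onorm (\<lambda>v. (H (x + t *\<^sub>R s) - H x) *v v) \<le> LH * norm ((x + t *\<^sub>R s) - x)"
      proof -
        have x0: "x \<in> Om" using inO[of 0] by simp
        show ?thesis by (rule bspec[OF bspec[OF lip inO[OF that]] x0])
      qed
      then show ?thesis by (intro mult_right_mono) auto
    qed
    also have "\<dots> = K * t" unfolding K_def using that by (simp add: power3_eq_cube)
    finally show ?thesis unfolding psi2_def by simp
  qed
  have p1b: "psi1 t \<le> 0" if ht: "0 \<le> t" "t \<le> 1" for t
  proof (cases "t = 0")
    case True
    then show ?thesis unfolding psi1_def p1_def c1_def by simp
  next
    case False
    then have t0: "0 < t" using ht by simp
    obtain z where z: "0 < z" "z < t" "psi1 t - psi1 0 = (t - 0) * psi2 z"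
      using MVT2[OF t0, of psi1 psi2] Dpsi1 ht by auto
    have "psi2 z \<le> 0" using p2b z ht by simp
    moreover have "psi1 0 = 0" unfolding psi1_def p1_def c1_def by simp
    ultimately show ?thesis using z t0 by (simp add: mult_nonneg_nonpos)
  qed
  obtain z where z: "0 < z" "z < 1" "psi 1 - psi 0 = (1 - 0) * psi1 z"
    using MVT2[of 0 1 psi psi1] Dpsi by auto
  have "psi1 z \<le> 0" using p1b z by simp
  moreover have "psi 0 = 0" unfolding psi_def by simp
  ultimately have "psi 1 \<le> 0" using z by simp
  then show ?thesis unfolding psi_def K_def c1_def c2_def by simp
qed


lemma (in cgs) mred_Q: "model_red g H s = e * (norm s)\<^sup>2 - Qf s"
  unfolding model_red_def Qf_def Am_def
  by (simp add: inner_add_right power2_norm_eq_inner algebra_simps)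

lemma cg_good_step:
  fixes gv :: "real^'n" and Hm :: "real^'n^'n"
  assumes symm: "\<And>u v. u \<bullet> (Hm *v v) = v \<bullet> (Hm *v u)" and e: "e > 0" and z: "zeta \<ge> 0"
    and d: "d > 0" and g0: "gv \<noteq> 0"
    and tc: "truncated_cg gv Hm e d zeta capCG M = (sv, fl)" and fl: "fl \<noteq> INT_MAX"
  shows "0 < norm sv \<and> norm sv \<le> d \<and> model_red gv Hm sv \<ge> e/4 * (norm sv)\<^sup>2"
proof -
  interpret cgs gv Hm e by unfold_locales (rule symm)
  have g0': "good 0" unfolding good_def by (simp add: cg0 g0)
  have "0 < norm sv \<and> norm sv \<le> d \<and> Qf sv \<le> e/2 * (norm sv)\<^sup>2"
    by (rule loop[OF e z d g0' _ _ tc[unfolded truncated_cg_def] fl]) (simp_all add: cg0 d)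
  moreover have "e/4 * (norm sv)\<^sup>2 \<le> e * (norm sv)\<^sup>2 - e/2 * (norm sv)\<^sup>2" using e by simp
  ultimately show ?thesis using mred_Q[of sv] by linarith
qed




theorem lemma4p5:
  fixes f :: "real^'n \<Rightarrow> real" and g :: "real^'n \<Rightarrow> real^'n" and H :: "real^'n \<Rightarrow> real^'n^'n"
    and x :: "nat \<Rightarrow> real^'n" and delta :: "nat \<Rightarrow> real" and s :: "nat \<Rightarrow> real^'n" and T :: enat
    and x0 :: "real^'n" and Omega :: "(real^'n) set"
    and epsg epsH gamma1 gamma2 psi delta0 deltamax eta zeta xi M Lg LH flow :: real
    and capCG :: bool
  assumes "epsg > 0" and "epsH > 0"
    and "0 < gamma1" and "gamma1 < 1" and "gamma2 \<ge> 1"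
    and "1 / gamma2 < psi" and "psi \<le> 1"
    and "delta0 > 0" and "deltamax \<ge> delta0"
    and "0 < eta" and "eta < 1" and "0 < zeta" and "zeta < 1" and "0 \<le> xi" and "xi < 1"
    and "M \<ge> Lg"
    and run: "alg4_run f g H epsg epsH gamma1 gamma2 psi x0 delta0 deltamax eta zeta capCG M x delta s T"
    and bdd: "\<forall>k. enat k \<le> T \<longrightarrow> flow \<le> f (x k)"
    and "open Omega"
    and seg: "\<forall>k. enat k < T \<longrightarrow> closed_segment (x k) (x k + s k) \<subseteq> Omega"
    and "\<forall>y\<in>Omega. (f has_derivative (\<lambda>h. g y \<bullet> h)) (at y)"
    and "\<forall>y\<in>Omega. (g has_derivative (\<lambda>h. H y *v h)) (at y)"
    and "continuous_on Omega H"
    and "Lg > 0" and "\<forall>y\<in>Omega. \<forall>z\<in>Omega. norm (g y - g z) \<le> Lg * norm (y - z)"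
    and "LH > 0" and "\<forall>y\<in>Omega. \<forall>z\<in>Omega. onorm (\<lambda>v. (H y - H z) *v v) \<le> LH * norm (y - z)"
  shows "let U = {k. enat k < T \<and> tr_rho f g H x s k < eta};
             S = {k. enat k < T \<and> tr_rho f g H x s k \<ge> eta};
             c = \<lfloor>1 + log gamma1 (3 * (1 - eta) / (2 * LH * deltamax)) + log gamma1 epsH\<rfloor>
         in U = {} \<or> (c \<ge> 1 \<and> (infinite S \<or> (finite U \<and> int (card U) \<le> c * (int (card S) + 1))))"
proof -
  note A = assms
  have epsg: "epsg > 0" and epsH: "epsH > 0" and g1: "0 < gamma1" "gamma1 < 1" and g2: "gamma2 \<ge> 1"
    and d0: "delta0 > 0" "deltamax \<ge> delta0" and eta: "0 < eta" "eta < 1" and zeta: "0 < zeta"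
    and opn: "open Omega" and LH: "LH > 0"
    and fd: "\<forall>y\<in>Omega. (f has_derivative (\<lambda>h. g y \<bullet> h)) (at y)"
    and gd: "\<forall>y\<in>Omega. (g has_derivative (\<lambda>h. H y *v h)) (at y)"
    and lip: "\<forall>y\<in>Omega. \<forall>z\<in>Omega. onorm (\<lambda>v. (H y - H z) *v v) \<le> LH * norm (y - z)"
    using assms by auto
  define rho where "rho k = tr_rho f g H x s k" for k
  define rs where "rs = 3 * (1 - eta) * epsH / (2 * LH)"
  have rs0: "rs > 0" unfolding rs_def using eta epsH LH by simp
  have xd0: "x 0 = x0" "delta 0 = delta0" using run unfolding alg4_run_def by auto
  have stepP: "(let (sCG, out) = cg_call g H epsH zeta capCG M (x k) (delta k)
         in (if cg_accepted epsg (g (x k)) out then s k = sCG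
             else meo_direction (g (x k)) (H (x k)) epsH (delta k) (s k)))
        \<and> (if rho k \<ge> eta
           then x (Suc k) = x k + s k \<and>
                delta (Suc k) = (if norm (s k) \<ge> psi * delta k then min (gamma2 * delta k) deltamax
                                 else delta k)
           else x (Suc k) = x k \<and> delta (Suc k) = gamma1 * norm (s k))" if "enat k < T" for k
    using run that unfolding alg4_run_def rho_def by blast
  have xO: "x k \<in> Omega" if "enat k < T" for k
    using seg that by auto
  have symk: "u \<bullet> (H (x k) *v v) = v \<bullet> (H (x k) *v u)" if "enat k < T" for k u v
    using hess_sym[OF opn xO[OF that] fd] gd xO[OF that] by blast
  have stepk: "0 < norm (s k) \<and> norm (s k) \<le> delta k \<and> model_red (g (x k)) (H (x k)) (s k) \<ge> epsH/4 * (norm (s k))\<^sup>2"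
    if k: "enat k < T" and dk: "delta k > 0" for k
  proof -
    obtain sCG out where co: "cg_call g H epsH zeta capCG M (x k) (delta k) = (sCG, out)"
      by (cases "cg_call g H epsH zeta capCG M (x k) (delta k)") auto
    have P1: "if cg_accepted epsg (g (x k)) out then s k = sCG
             else meo_direction (g (x k)) (H (x k)) epsH (delta k) (s k)"
      using stepP[OF k] co by simp
    show ?thesis
    proof (cases "cg_accepted epsg (g (x k)) out")
      case True
      then have sk: "s k = sCG" using P1 by simp
      have gk: "g (x k) \<noteq> 0"
      proof
        assume "g (x k) = 0"
        then have "out = INT_RES" using co unfolding cg_call_def by simp
        then show False using True epsg \<open>g (x k) = 0\<close> unfolding cg_accepted_def by simp
      qed
      then have tc: "truncated_cg (g (x k)) (H (x k)) epsH (delta k) zeta capCG M = (sCG, out)"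
        using co unfolding cg_call_def by simp
      have "out \<noteq> INT_MAX" using True unfolding cg_accepted_def by auto
      from cg_good_step[OF symk[OF k] epsH _ dk gk tc this] zeta sk show ?thesis by simp
    next
      case False
      then have md: "meo_direction (g (x k)) (H (x k)) epsH (delta k) (s k)" using P1 by simp
      then have a: "g (x k) \<bullet> s k \<le> 0" "s k \<bullet> (H (x k) *v s k) \<le> - (1/2) * epsH * (norm (s k))\<^sup>2"
        "norm (s k) = delta k" unfolding meo_direction_def by auto
      have "model_red (g (x k)) (H (x k)) (s k) \<ge> epsH/4 * (norm (s k))\<^sup>2"
        unfolding model_red_def using a epsH by simp
      then show ?thesis using a dk by simp
    qed
  qed
  have succ: "rho k \<ge> eta" if k: "enat k < T" and dk: "delta k > 0" and sm: "norm (s k) \<le> rs" for k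
  proof -
    note st = stepk[OF k dk]
    define m where "m = model_red (g (x k)) (H (x k)) (s k)"
    have m0: "m \<ge> epsH/4 * (norm (s k))\<^sup>2" using st unfolding m_def by simp
    have "epsH/4 * (norm (s k))\<^sup>2 > 0" using st epsH by simp
    then have mpos: "m > 0" using m0 by linarith
    have tay: "f (x k + s k) \<le> f (x k) + g (x k) \<bullet> s k + 1/2 * (s k \<bullet> (H (x k) *v s k)) + LH / 6 * norm (s k) ^ 3"
      using taylor_ub[OF seg[rule_format, OF k] fd gd lip] .
    then have t2: "f (x k) - f (x k + s k) \<ge> m - LH / 6 * norm (s k) ^ 3"
      unfolding m_def model_red_def by simp
    have "LH / 6 * norm (s k) ^ 3 = (LH / 6 * norm (s k)) * (norm (s k))\<^sup>2"
      by (simp add: power2_eq_square power3_eq_cube)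
    also have "\<dots> \<le> (LH / 6 * rs) * (norm (s k))\<^sup>2"
      using sm LH by (intro mult_right_mono) auto
    also have "\<dots> = (1 - eta) * (epsH / 4 * (norm (s k))\<^sup>2)" unfolding rs_def using LH by simp
    also have "\<dots> \<le> (1 - eta) * m" using m0 eta by (intro mult_left_mono) auto
    finally have "f (x k) - f (x k + s k) \<ge> eta * m" using t2 by (simp add: algebra_simps)
    then show ?thesis unfolding rho_def tr_rho_def m_def[symmetric] using mpos
      by (simp add: pos_le_divide_eq)
  qed
  have Tprev: "enat k < T" if "enat (Suc k) < T" for k
    by (rule le_less_trans[OF _ that]) simp
  have Tle: "enat i < T" if "enat k < T" "i \<le> k" for i k
    by (rule le_less_trans[OF _ that(1)]) (simp add: that(2))
  have dinv: "enat k < T \<Longrightarrow> 0 < delta k \<and> delta k \<le> deltamax" for k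
  proof (induction k)
    case 0
    then show ?case using xd0 d0 by simp
  next
    case (Suc k)
    have k: "enat k < T" using Tprev Suc.prems .
    have IH: "0 < delta k" "delta k \<le> deltamax" using Suc.IH k by auto
    note st = stepk[OF k IH(1)]
    show ?case
    proof (cases "rho k \<ge> eta")
      case True
      then have "delta (Suc k) = (if norm (s k) \<ge> psi * delta k then min (gamma2 * delta k) deltamax else delta k)"
        using stepP[OF k] by simp
      moreover have "gamma2 * delta k > 0" using g2 IH by simp
      ultimately show ?thesis using IH d0 by auto
    next
      case False
      then have "delta (Suc k) = gamma1 * norm (s k)" using stepP[OF k] by simp
      moreover have "gamma1 * norm (s k) \<le> 1 * delta k" using g1 st by (intro mult_mono) auto
      ultimately show ?thesis using g1 st IH by simp
    qed
  qed
  have uns: "rs < norm (s k) \<and> delta (Suc k) = gamma1 * norm (s k) \<and> norm (s k) \<le> delta k"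
    if k: "enat k < T" and r: "rho k < eta" for k
  proof -
    have dk: "delta k > 0" using dinv k by simp
    have "\<not> norm (s k) \<le> rs" using succ[OF k dk] r by auto
    moreover have "delta (Suc k) = gamma1 * norm (s k)" using stepP[OF k] r by simp
    ultimately show ?thesis using stepk[OF k dk] by simp
  qed
  define L where "L = log gamma1 (3 * (1 - eta) / (2 * LH * deltamax)) + log gamma1 epsH"
  define c where "c = \<lfloor>1 + log gamma1 (3 * (1 - eta) / (2 * LH * deltamax)) + log gamma1 epsH\<rfloor>"
  have dm0: "deltamax > 0" using d0 by simp
  have L_eq: "L = ln (rs / deltamax) / ln gamma1"
  proof -
    define X where "X = 3 * (1 - eta) / (2 * LH * deltamax)"
    have X0: "X > 0" unfolding X_def using eta LH dm0 by simp
    have "rs / deltamax = X * epsH"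
      unfolding rs_def X_def by (simp add: field_simps)
    moreover have "log gamma1 (X * epsH) = log gamma1 X + log gamma1 epsH"
      using X0 epsH log_mult[of gamma1 X epsH] by simp
    ultimately have "log gamma1 (rs / deltamax) = L"
      unfolding L_def X_def by simp
    then show ?thesis by (simp add: log_def)
  qed
  have c_eq: "c = \<lfloor>1 + L\<rfloor>" unfolding c_def L_def by (simp add: add.assoc)
  have runb: "int (b - a + 1) \<le> c" if H: "\<forall>i. a \<le> i \<and> i \<le> b \<longrightarrow> enat i < T \<and> rho i < eta" and ab: "a \<le> b" for a b
  proof -
    have dec: "a + i \<le> b \<longrightarrow> delta (a + i) \<le> gamma1 ^ i * deltamax" for i
    proof (induction i)
      case 0
      then show ?case using dinv H by simp
    next
      case (Suc i)
      show ?case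
      proof
        assume ai: "a + Suc i \<le> b"
        then have "enat (a + i) < T" "rho (a + i) < eta" using H by auto
        note u = uns[OF this]
        have "delta (a + Suc i) = gamma1 * norm (s (a + i))" using u by simp
        also have "\<dots> \<le> gamma1 * delta (a + i)" using u g1 by simp
        also have "\<dots> \<le> gamma1 * (gamma1 ^ i * deltamax)" using Suc ai g1 by simp
        finally show "delta (a + Suc i) \<le> gamma1 ^ Suc i * deltamax" by simp
      qed
    qed
    have bT: "enat b < T" "rho b < eta" using H ab by auto
    have "rs < delta b" using uns[OF bT] by simp
    also have "delta b \<le> gamma1 ^ (b - a) * deltamax" using dec[of "b - a"] ab by simp
    finally have "rs / deltamax < gamma1 ^ (b - a)" using dm0 by (simp add: pos_divide_less_eq)
    moreover have "gamma1 ^ (b - a) > 0" using g1 by simp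
    moreover have "rs / deltamax > 0" using rs0 dm0 by simp
    ultimately have "ln (rs / deltamax) < ln (gamma1 ^ (b - a))" using ln_less_cancel_iff by blast
    then have "ln (rs / deltamax) < real (b - a) * ln gamma1" by (simp add: ln_realpow)
    moreover have "ln gamma1 < 0" using g1 by simp
    ultimately have "real (b - a) < ln (rs / deltamax) / ln gamma1" by (simp add: pos_less_divide_eq neg_less_divide_eq)
    then have "real (b - a + 1) \<le> 1 + L" using L_eq ab by simp
    then show ?thesis unfolding c_eq by (simp add: le_floor_iff)
  qed
  define U where "U = {k. enat k < T \<and> tr_rho f g H x s k < eta}"
  define S where "S = {k. enat k < T \<and> tr_rho f g H x s k \<ge> eta}"
  have main: "U = {} \<or> (c \<ge> 1 \<and> (infinite S \<or> (finite U \<and> int (card U) \<le> c * (int (card S) + 1))))"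
  proof (cases "U = {}")
    case True
    then show ?thesis by simp
  next
    case False
    then obtain k0 where "k0 \<in> U" by auto
    then have "int (k0 - k0 + 1) \<le> c" by (intro runb) (auto simp: U_def rho_def)
    then have c1: "c \<ge> 1" by simp
    show ?thesis
    proof (cases "finite S")
      case False
      then show ?thesis using c1 by simp
    next
      case fS: True
      define n where "n = nat c"
      have cn: "int n = c" unfolding n_def using c1 by simp
      have cover: "U \<subseteq> {..<n} \<union> (\<Union>j\<in>S. {Suc j..j + n})"
      proof
        fix k assume kU: "k \<in> U"
        then have k: "enat k < T" "rho k < eta" unfolding U_def rho_def by auto
        show "k \<in> {..<n} \<union> (\<Union>j\<in>S. {Suc j..j + n})"
        proof (cases "\<exists>j\<in>S. j < k")
          case True
          define J where "J = Max {j\<in>S. j < k}"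
          have fin: "finite {j\<in>S. j < k}" using fS by simp
          have ne: "{j\<in>S. j < k} \<noteq> {}" using True by auto
          have JS: "J \<in> S" "J < k" using Max_in[OF fin ne] unfolding J_def by auto
          have Jmax: "j \<le> J" if "j \<in> S" "j < k" for j
            unfolding J_def using Max_ge[OF fin] that by simp
          have "\<forall>i. Suc J \<le> i \<and> i \<le> k \<longrightarrow> enat i < T \<and> rho i < eta"
          proof (intro allI impI)
            fix i assume i: "Suc J \<le> i \<and> i \<le> k"
            have iT: "enat i < T" using Tle[OF k(1)] i by simp
            have "rho i < eta"
            proof (cases "i = k")
              case True then show ?thesis using k by simp
            next
              case False
              then have "i < k" using i by simp
              show ?thesis
              proof (rule ccontr)
                assume "\<not> rho i < eta"
                then have "i \<in> S" using iT unfolding S_def rho_def by auto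
                then have "i \<le> J" using Jmax \<open>i < k\<close> by simp
                then show False using i by simp
              qed
            qed
            then show "enat i < T \<and> rho i < eta" using iT by simp
          qed
          from runb[OF this] JS have "int (k - Suc J + 1) \<le> c" by simp
          then have "k \<le> J + n" using cn JS by simp
          then show ?thesis using JS by auto
        next
          case False
          have "\<forall>i. 0 \<le> i \<and> i \<le> k \<longrightarrow> enat i < T \<and> rho i < eta"
          proof (intro allI impI)
            fix i assume i: "0 \<le> i \<and> i \<le> k"
            have iT: "enat i < T" using Tle[OF k(1)] i by simp
            have "rho i < eta"
            proof (cases "i = k")
              case True then show ?thesis using k by simp
            next
              case False
              then have "i < k" using i by simp
              show ?thesis
              proof (rule ccontr)
                assume "\<not> rho i < eta"
                then have "i \<in> S" using iT unfolding S_def rho_def by auto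
                then show False using \<open>\<not> (\<exists>j\<in>S. j < k)\<close> \<open>i < k\<close> by auto
              qed
            qed
            then show "enat i < T \<and> rho i < eta" using iT by simp
          qed
          from runb[OF this] have "int (k - 0 + 1) \<le> c" by simp
          then have "k < n" using cn by simp
          then show ?thesis by simp
        qed
      qed
      have finU: "finite U" by (rule finite_subset[OF cover]) (simp add: fS)
      have "card U \<le> card ({..<n} \<union> (\<Union>j\<in>S. {Suc j..j + n}))"
        using cover fS by (intro card_mono) auto
      also have "\<dots> \<le> card {..<n} + card (\<Union>j\<in>S. {Suc j..j + n})" by (rule card_Un_le)
      also have "card (\<Union>j\<in>S. {Suc j..j + n}) \<le> (\<Sum>j\<in>S. card {Suc j..j + n})" using fS by (rule card_UN_le)
      also have "(\<Sum>j\<in>S. card {Suc j..j + n}) = card S * n" by simp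
      finally have "card U \<le> n + card S * n" by simp
      then have "int (card U) \<le> int n * (int (card S) + 1)"
        by (simp add: algebra_simps) (metis of_nat_add of_nat_le_iff of_nat_mult)
      then show ?thesis using finU c1 cn by simp
    qed
  qed
  then show ?thesis unfolding U_def S_def c_def Let_def .
qed


end
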